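(* Let $G=(U\sqcup V,E)$ be a bipartite graph with $U=\{u_1,\ldots,u_n\}$, $V=\{v_1,\ldots,v_s\}$, $n\ge s$, and integer weights $w:E\to\mathbb{Z}$, and let $k\in\mathbb{Z}$. Let $U'=\{u'_1,\ldots,u'_n\}$ and $V'=\{v'_1,\ldots,v'_s\}$ be new vertices, and let $G_s$ be the bipartite graph with bipartition classes $U\sqcup V'$ and $V\sqcup U'$ and edge set $E\cup E_f\cup E_U$, where $E_f=\{v'_ju'_i:\ u_iv_j\in E\}$ and $E_U=\{u_iu'_i:\ 1\le i\le n\}$. Define $w_s$ by $w_s(e)=w(e)$ for $e\in E$, $w_s(v'_ju'_i)=w(u_iv_j)$ for $v'_ju'_i\in E_f$, and $w_s(e)=k$ for $e\in E_U$. If $N$ is a minimum weight perfect matching of $\{G_s,w_s\}$, then $M=N\cap E$ is an optimum matching of $\{G,w\}$ which covers $V$.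
   Context: A matching is a set of pairwise vertex-disjoint edges; it is perfect if it covers all vertices. For a weight function $c$, the weight of a matching $M$ is $\sum_{e\in M}c(e)$; a minimum weight perfect matching is a perfect matching of minimum weight among all perfect matchings. An optimum matching of $\{G,w\}$ is a matching of maximum cardinality in $G$ whose weight is minimum among all maximum cardinality matchings of $G$. *)

theory Defs
  imports Main
begin

(* Generic matching notions; a graph is given by its edge set, each edge a 2-element vertex set. *)
definition is_matching :: "'a set set \<Rightarrow> 'a set set \<Rightarrow> bool" where
  "is_matching E M \<longleftrightarrow> M \<subseteq> E \<and> (\<forall>e\<in>M. \<forall>f\<in>M. e \<noteq> f \<longrightarrow> e \<inter> f = {})"

definition perfect_matching :: "'a set \<Rightarrow> 'a set set \<Rightarrow> 'a set set \<Rightarrow> bool" where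
  "perfect_matching Vs E M \<longleftrightarrow> is_matching E M \<and> \<Union>M = Vs"

definition mweight :: "('a set \<Rightarrow> int) \<Rightarrow> 'a set set \<Rightarrow> int" where
  "mweight c M = (\<Sum>e\<in>M. c e)"

definition min_weight_perfect_matching ::
  "'a set \<Rightarrow> 'a set set \<Rightarrow> ('a set \<Rightarrow> int) \<Rightarrow> 'a set set \<Rightarrow> bool" where
  "min_weight_perfect_matching Vs E c M \<longleftrightarrow> perfect_matching Vs E M \<and>
     (\<forall>M'. perfect_matching Vs E M' \<longrightarrow> mweight c M \<le> mweight c M')"

definition max_card_matching :: "'a set set \<Rightarrow> 'a set set \<Rightarrow> bool" where
  "max_card_matching E M \<longleftrightarrow> is_matching E M \<and>
     (\<forall>M'. is_matching E M' \<longrightarrow> card M' \<le> card M)"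

definition optimum_matching :: "'a set set \<Rightarrow> ('a set \<Rightarrow> int) \<Rightarrow> 'a set set \<Rightarrow> bool" where
  "optimum_matching E c M \<longleftrightarrow> max_card_matching E M \<and>
     (\<forall>M'. max_card_matching E M' \<longrightarrow> mweight c M \<le> mweight c M')"

(* Vertices: Uv i = u_i, Vv j = v_j, Up i = u'_i, Vp j = v'_j (0-based indices). *)
datatype vtx = Uv nat | Vv nat | Up nat | Vp nat

definition bip_edges :: "nat \<Rightarrow> nat \<Rightarrow> vtx set set" where
  "bip_edges n s = {{Uv i, Vv j} | i j. i < n \<and> j < s}"

fun unprime :: "vtx \<Rightarrow> vtx" where
  "unprime (Up i) = Uv i" | "unprime (Vp j) = Vv j" | "unprime (Uv i) = Uv i" | "unprime (Vv j) = Vv j"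

definition Ef :: "vtx set set \<Rightarrow> vtx set set" where
  "Ef E = {{Vp j, Up i} | i j. {Uv i, Vv j} \<in> E}"

definition EU :: "nat \<Rightarrow> vtx set set" where
  "EU n = {{Uv i, Up i} | i. i < n}"

definition Gs_vertices :: "nat \<Rightarrow> nat \<Rightarrow> vtx set" where
  "Gs_vertices n s = Uv ` {..<n} \<union> Vp ` {..<s} \<union> Vv ` {..<s} \<union> Up ` {..<n}"

definition Gs_edges :: "nat \<Rightarrow> vtx set set \<Rightarrow> vtx set set" where
  "Gs_edges n E = E \<union> Ef E \<union> EU n"

definition ws :: "vtx set set \<Rightarrow> (vtx set \<Rightarrow> int) \<Rightarrow> int \<Rightarrow> vtx set \<Rightarrow> int" where
  "ws E w k e = (if e \<in> E then w e else if e \<in> Ef E then w (unprime ` e) else k)"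

end

theory Submission
  imports Defs
begin

fun pr :: "vtx \<Rightarrow> vtx" where
  "pr (Uv i) = Up i" | "pr (Vv j) = Vp j" | "pr (Up i) = Up i" | "pr (Vp j) = Vp j"

definition vidx :: "vtx set \<Rightarrow> nat" where "vidx e = (THE j. Vv j \<in> e)"
definition uidx :: "vtx set \<Rightarrow> nat" where "uidx e = (THE i. Uv i \<in> e)"

definition EUpart :: "nat \<Rightarrow> vtx set set \<Rightarrow> vtx set set" where
  "EUpart n M = (\<lambda>i. {Uv i, Up i}) ` {i. i < n \<and> Uv i \<notin> \<Union>M}"

definition NM :: "nat \<Rightarrow> vtx set set \<Rightarrow> vtx set set" where
  "NM n M = M \<union> (`) pr ` M \<union> EUpart n M"

lemma edge_form:
  assumes "e \<in> bip_edges n s"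
  obtains i j where "i < n" "j < s" "e = {Uv i, Vv j}"
  using assms by (auto simp: bip_edges_def)

lemma vidx_eq[simp]: "vidx {Uv i, Vv j} = j" by (auto simp: vidx_def)
lemma uidx_eq[simp]: "uidx {Uv i, Vv j} = i" by (auto simp: uidx_def)

lemma finite_bip: "finite (bip_edges n s)"
proof -
  have "bip_edges n s = (\<lambda>(i,j). {Uv i, Vv j}) ` ({..<n} \<times> {..<s})"
    by (auto simp: bip_edges_def)
  then show ?thesis by simp
qed

lemma vidx_inj:
  assumes "M \<subseteq> bip_edges n s" "is_matching E M"
  shows "inj_on vidx M"
proof (rule inj_onI)
  fix e f assume ef: "e \<in> M" "f \<in> M" "vidx e = vidx f"
  obtain i j where e: "e = {Uv i, Vv j}" using assms ef by (meson edge_form subsetD)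
  obtain i' j' where f: "f = {Uv i', Vv j'}" using assms ef by (meson edge_form subsetD)
  have "Vv j \<in> e \<inter> f" using ef e f by auto
  then show "e = f" using assms(2) ef unfolding is_matching_def by blast
qed

lemma uidx_inj:
  assumes "M \<subseteq> bip_edges n s" "is_matching E M"
  shows "inj_on uidx M"
proof (rule inj_onI)
  fix e f assume ef: "e \<in> M" "f \<in> M" "uidx e = uidx f"
  obtain i j where e: "e = {Uv i, Vv j}" using assms ef by (meson edge_form subsetD)
  obtain i' j' where f: "f = {Uv i', Vv j'}" using assms ef by (meson edge_form subsetD)
  have "Uv i \<in> e \<inter> f" using ef e f by auto
  then show "e = f" using assms(2) ef unfolding is_matching_def by blast
qed

lemma vidx_img:
  assumes "M \<subseteq> bip_edges n s"
  shows "vidx ` M = {j. Vv j \<in> \<Union>M}" "vidx ` M \<subseteq> {..<s}"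
proof -
  show "vidx ` M = {j. Vv j \<in> \<Union>M}"
  proof
    show "vidx ` M \<subseteq> {j. Vv j \<in> \<Union>M}"
    proof
      fix x assume "x \<in> vidx ` M"
      then obtain e where e: "e \<in> M" "x = vidx e" by blast
      then obtain i j where "e = {Uv i, Vv j}" using assms by (meson edge_form subsetD)
      then show "x \<in> {j. Vv j \<in> \<Union>M}" using e by auto
    qed
    show "{j. Vv j \<in> \<Union>M} \<subseteq> vidx ` M"
    proof
      fix x assume "x \<in> {j. Vv j \<in> \<Union>M}"
      then obtain e where e: "e \<in> M" "Vv x \<in> e" by blast
      then obtain i j where "e = {Uv i, Vv j}" using assms by (meson edge_form subsetD)
      then show "x \<in> vidx ` M" using e by (auto intro!: image_eqI[of _ _ e])
    qed
  qed
  show "vidx ` M \<subseteq> {..<s}"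
  proof
    fix x assume "x \<in> vidx ` M"
    then obtain e where e: "e \<in> M" "x = vidx e" by blast
    then obtain i j where "j < s" "e = {Uv i, Vv j}" using assms by (meson edge_form subsetD)
    then show "x \<in> {..<s}" using e by auto
  qed
qed

lemma uidx_img:
  assumes "M \<subseteq> bip_edges n s"
  shows "uidx ` M = {i. Uv i \<in> \<Union>M}" "uidx ` M \<subseteq> {..<n}"
proof -
  show "uidx ` M = {j. Uv j \<in> \<Union>M}"
  proof
    show "uidx ` M \<subseteq> {j. Uv j \<in> \<Union>M}"
    proof
      fix x assume "x \<in> uidx ` M"
      then obtain e where e: "e \<in> M" "x = uidx e" by blast
      then obtain i j where "e = {Uv i, Vv j}" using assms by (meson edge_form subsetD)
      then show "x \<in> {j. Uv j \<in> \<Union>M}" using e by auto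
    qed
    show "{j. Uv j \<in> \<Union>M} \<subseteq> uidx ` M"
    proof
      fix x assume "x \<in> {j. Uv j \<in> \<Union>M}"
      then obtain e where e: "e \<in> M" "Uv x \<in> e" by blast
      then obtain i j where "e = {Uv i, Vv j}" using assms by (meson edge_form subsetD)
      then show "x \<in> uidx ` M" using e by (auto intro!: image_eqI[of _ _ e])
    qed
  qed
  show "uidx ` M \<subseteq> {..<n}"
  proof
    fix x assume "x \<in> uidx ` M"
    then obtain e where e: "e \<in> M" "x = uidx e" by blast
    then obtain i j where "i < n" "e = {Uv i, Vv j}" using assms by (meson edge_form subsetD)
    then show "x \<in> {..<n}" using e by auto
  qed
qed

lemma card_le_s:
  assumes "M \<subseteq> bip_edges n s" "is_matching E M"
  shows "card M \<le> s"
proof -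
  have "card M = card (vidx ` M)" using vidx_inj[OF assms] by (simp add: card_image)
  also have "\<dots> \<le> card {..<s}" using vidx_img(2)[OF assms(1)] by (intro card_mono) auto
  finally show ?thesis by simp
qed

lemma card_eq_s:
  assumes "M \<subseteq> bip_edges n s" "is_matching E M" "Vv ` {..<s} \<subseteq> \<Union>M"
  shows "card M = s"
proof -
  have "vidx ` M = {..<s}" using vidx_img[OF assms(1)] assms(3) by auto
  then show ?thesis using vidx_inj[OF assms(1,2)] card_image by fastforce
qed

lemma covers_of_card:
  assumes "M \<subseteq> bip_edges n s" "is_matching E M" "card M = s"
  shows "Vv ` {..<s} \<subseteq> \<Union>M"
proof -
  have "card (vidx ` M) = s" using vidx_inj[OF assms(1,2)] assms(3) card_image by metis
  then have "vidx ` M = {..<s}" using vidx_img(2)[OF assms(1)]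
    by (metis card_lessThan card_subset_eq finite_lessThan)
  then show ?thesis using vidx_img(1)[OF assms(1)] by auto
qed

lemma card_EUpart:
  assumes "M \<subseteq> bip_edges n s" "is_matching E M"
  shows "card (EUpart n M) = n - card M"
proof -
  have inj: "inj_on (\<lambda>i. {Uv i, Up i}) {i. i < n \<and> Uv i \<notin> \<Union>M}"
    by (auto simp: inj_on_def doubleton_eq_iff)
  have eq: "{i. i < n \<and> Uv i \<notin> \<Union>M} = {..<n} - uidx ` M"
    using uidx_img[OF assms(1)] by auto
  have "card (EUpart n M) = card ({..<n} - uidx ` M)"
    unfolding EUpart_def using inj eq by (simp add: card_image)
  also have "\<dots> = n - card (uidx ` M)"
    using uidx_img(2)[OF assms(1)] by (simp add: card_Diff_subset finite_subset)
  also have "\<dots> = n - card M" using uidx_inj[OF assms] by (simp add: card_image)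
  finally show ?thesis .
qed


lemma pr_img[simp]: "pr ` {Uv i, Vv j} = {Up i, Vp j}" by auto

lemma prM_Ef:
  assumes "E \<subseteq> bip_edges n s" "e \<in> E"
  shows "pr ` e \<in> Ef E"
proof -
  obtain i j where "e = {Uv i, Vv j}" using assms by (meson edge_form subsetD)
  moreover have "pr ` e = {Vp j, Up i}" using calculation by auto
  ultimately show ?thesis using assms(2) unfolding Ef_def by blast
qed

lemma NM_perfect:
  assumes E: "E \<subseteq> bip_edges n s" and M: "M \<subseteq> E" "is_matching E M"
    and cov: "Vv ` {..<s} \<subseteq> \<Union>M"
  shows "perfect_matching (Gs_vertices n s) (Gs_edges n E) (NM n M)"
proof -
  have MB: "M \<subseteq> bip_edges n s" using E M by auto
  have form: "\<And>e. e \<in> M \<Longrightarrow> \<exists>i j. i < n \<and> j < s \<and> e = {Uv i, Vv j}"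
    using MB by (meson edge_form subsetD)
  have sub: "NM n M \<subseteq> Gs_edges n E"
  proof
    fix e assume "e \<in> NM n M"
    then consider "e \<in> M" | "e \<in> (`) pr ` M" | "e \<in> EUpart n M" unfolding NM_def by blast
    then show "e \<in> Gs_edges n E"
    proof cases
      case 1 then show ?thesis using M unfolding Gs_edges_def by blast
    next
      case 2 then obtain a where a: "a \<in> M" "e = pr ` a" by blast
      then have "e \<in> Ef E" using prM_Ef[OF E] M by blast
      then show ?thesis unfolding Gs_edges_def by blast
    next
      case 3 then have "e \<in> EU n" unfolding EUpart_def EU_def by blast
      then show ?thesis unfolding Gs_edges_def by blast
    qed
  qed
  have disjM: "\<And>e f. e \<in> M \<Longrightarrow> f \<in> M \<Longrightarrow> e \<noteq> f \<Longrightarrow> e \<inter> f = {}"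
    using M(2) unfolding is_matching_def by blast
  have shape: "(\<exists>i j. {Uv i, Vv j} \<in> M \<and> e = {Uv i, Vv j}) \<or>
      (\<exists>i j. {Uv i, Vv j} \<in> M \<and> e = {Up i, Vp j}) \<or>
      (\<exists>i. i < n \<and> Uv i \<notin> \<Union>M \<and> e = {Uv i, Up i})" if eN: "e \<in> NM n M" for e
  proof -
    consider "e \<in> M" | "e \<in> (`) pr ` M" | "e \<in> EUpart n M" using eN unfolding NM_def by blast
    then show ?thesis
    proof cases
      case 1
      then obtain i j where ij: "e = {Uv i, Vv j}" using form by blast
      with 1 have "{Uv i, Vv j} \<in> M \<and> e = {Uv i, Vv j}" by simp
      then show ?thesis by blast
    next
      case 2 then obtain a where a: "a \<in> M" "e = pr ` a" by blast
      then obtain i j where ij: "a = {Uv i, Vv j}" using form by blast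
      with a have "{Uv i, Vv j} \<in> M \<and> e = {Up i, Vp j}" by simp
      then show ?thesis by blast
    next
      case 3 then obtain i where "i < n \<and> Uv i \<notin> \<Union>M \<and> e = {Uv i, Up i}"
        unfolding EUpart_def by blast
      then show ?thesis by blast
    qed
  qed
  have uniqU: "\<And>i j j'. {Uv i, Vv j} \<in> M \<Longrightarrow> {Uv i, Vv j'} \<in> M \<Longrightarrow> j = j'"
  proof -
    fix i j j' assume h: "{Uv i, Vv j} \<in> M" "{Uv i, Vv j'} \<in> M"
    then have "{Uv i, Vv j} \<inter> {Uv i, Vv j'} \<noteq> {}" by auto
    then have "{Uv i, Vv j} = {Uv i, Vv j'}" using disjM h by blast
    then show "j = j'" by (auto simp: doubleton_eq_iff)
  qed
  have uniqV: "\<And>i j i'. {Uv i, Vv j} \<in> M \<Longrightarrow> {Uv i', Vv j} \<in> M \<Longrightarrow> i = i'"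
  proof -
    fix i j i' assume h: "{Uv i, Vv j} \<in> M" "{Uv i', Vv j} \<in> M"
    then have "{Uv i, Vv j} \<inter> {Uv i', Vv j} \<noteq> {}" by auto
    then have "{Uv i, Vv j} = {Uv i', Vv j}" using disjM h by blast
    then show "i = i'" by (auto simp: doubleton_eq_iff)
  qed
  have disj: "\<forall>e\<in>NM n M. \<forall>f\<in>NM n M. e \<noteq> f \<longrightarrow> e \<inter> f = {}"
  proof (intro ballI impI)
    fix e f assume e: "e \<in> NM n M" and f: "f \<in> NM n M" and ne: "e \<noteq> f"
    from shape[OF e] shape[OF f] ne show "e \<inter> f = {}"
      apply (elim disjE exE conjE)
      apply simp_all
      apply (blast dest: uniqU uniqV)+
      done
  qed
  have cov1: "\<Union>(NM n M) \<subseteq> Gs_vertices n s"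
  proof
    fix x assume "x \<in> \<Union>(NM n M)"
    then obtain e where e: "e \<in> NM n M" "x \<in> e" by blast
    from e(1) consider "e \<in> M" | "e \<in> (`) pr ` M" | "e \<in> EUpart n M" unfolding NM_def by blast
    then show "x \<in> Gs_vertices n s"
    proof cases
      case 1
      then obtain i j where "i < n" "j < s" "e = {Uv i, Vv j}" using form by blast
      then show ?thesis using e(2) unfolding Gs_vertices_def by auto
    next
      case 2
      then obtain a where a: "a \<in> M" "e = pr ` a" by blast
      then obtain i j where "i < n" "j < s" "a = {Uv i, Vv j}" using form by blast
      then show ?thesis using e(2) a unfolding Gs_vertices_def by auto
    next
      case 3
      then show ?thesis using e(2) unfolding Gs_vertices_def EUpart_def by auto
    qed
  qed
  have cov2: "Gs_vertices n s \<subseteq> \<Union>(NM n M)"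
  proof
    fix x assume x: "x \<in> Gs_vertices n s"
    show "x \<in> \<Union>(NM n M)"
    proof (cases x)
      case (Uv i)
      then show ?thesis using x unfolding NM_def EUpart_def Gs_vertices_def by auto
    next
      case (Vv j)
      then have "Vv j \<in> \<Union>M" using x cov unfolding Gs_vertices_def by auto
      then show ?thesis using Vv unfolding NM_def by auto
    next
      case (Vp j)
      then have "Vv j \<in> \<Union>M" using x cov unfolding Gs_vertices_def by auto
      then obtain e where e: "e \<in> M" "Vv j \<in> e" by blast
      then have "Vp j \<in> pr ` e" using image_eqI[of "Vp j" pr "Vv j" e] by simp
      then show ?thesis using Vp e unfolding NM_def by auto
    next
      case (Up i)
      show ?thesis
      proof (cases "Uv i \<in> \<Union>M")
        case True
        then obtain e where e: "e \<in> M" "Uv i \<in> e" by blast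
        then have "Up i \<in> pr ` e" using image_eqI[of "Up i" pr "Uv i" e] by simp
        then show ?thesis using Up e unfolding NM_def by auto
      next
        case False
        then show ?thesis using Up x unfolding NM_def EUpart_def Gs_vertices_def by auto
      qed
    qed
  qed
  show ?thesis unfolding perfect_matching_def is_matching_def
    using sub disj cov1 cov2 by blast
qed


lemma pr_inj:
  assumes "M \<subseteq> bip_edges n s"
  shows "inj_on ((`) pr) M"
proof (rule inj_onI)
  fix e f assume ef: "e \<in> M" "f \<in> M" "pr ` e = pr ` f"
  obtain i j where e: "e = {Uv i, Vv j}" using assms ef by (meson edge_form subsetD)
  obtain i' j' where f: "f = {Uv i', Vv j'}" using assms ef by (meson edge_form subsetD)
  have "{Up i, Vp j} = {Up i', Vp j'}" using ef e f by simp
  then have "i = i' \<and> j = j'" by (auto simp: doubleton_eq_iff)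
  then show "e = f" using e f by simp
qed

lemma gen_weight:
  assumes E: "E \<subseteq> bip_edges n s" and M: "M \<subseteq> E" and M': "M' \<subseteq> E"
  shows "mweight (ws E w k) (M \<union> (`) pr ` M' \<union> EUpart n M)
         = mweight w M + mweight w M' + k * int (card (EUpart n M))"
proof -
  have fE: "finite E" using E finite_bip finite_subset by blast
  have fM: "finite M" using fE M finite_subset by blast
  have fM': "finite M'" using fE M' finite_subset by blast
  have fEU: "finite (EUpart n M)" unfolding EUpart_def by simp
  have formE: "\<And>e. e \<in> E \<Longrightarrow> \<exists>i j. e = {Uv i, Vv j}" using E by (meson edge_form subsetD)
  have d1: "M \<inter> (`) pr ` M' = {}"
  proof (rule ccontr)
    assume "M \<inter> (`) pr ` M' \<noteq> {}"
    then obtain e a where "e \<in> M" "a \<in> M'" "e = pr ` a" by blast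
    moreover obtain i j where "e = {Uv i, Vv j}" using formE M \<open>e \<in> M\<close> by blast
    moreover obtain i' j' where "a = {Uv i', Vv j'}" using formE M' \<open>a \<in> M'\<close> by blast
    ultimately show False by (auto simp: doubleton_eq_iff)
  qed
  have d2: "(M \<union> (`) pr ` M') \<inter> EUpart n M = {}"
  proof (rule ccontr)
    assume "(M \<union> (`) pr ` M') \<inter> EUpart n M \<noteq> {}"
    then obtain e where e: "e \<in> M \<union> (`) pr ` M'" "e \<in> EUpart n M" by blast
    then obtain i where ei: "e = {Uv i, Up i}" unfolding EUpart_def by blast
    from e(1) show False
    proof
      assume "e \<in> M"
      then obtain a b where "e = {Uv a, Vv b}" using formE M by blast
      then show False using ei by (auto simp: doubleton_eq_iff)
    next
      assume "e \<in> (`) pr ` M'"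
      then obtain x where x: "x \<in> M'" "e = pr ` x" by blast
      then obtain a b where "x = {Uv a, Vv b}" using formE M' by blast
      then show False using ei x by (auto simp: doubleton_eq_iff)
    qed
  qed
  have s1: "(\<Sum>e\<in>M. ws E w k e) = mweight w M"
    unfolding mweight_def ws_def using M by (intro sum.cong) auto
  have s2: "(\<Sum>e\<in>(`) pr ` M'. ws E w k e) = mweight w M'"
  proof -
    have "(\<Sum>e\<in>(`) pr ` M'. ws E w k e) = (\<Sum>e\<in>M'. ws E w k (pr ` e))"
      using pr_inj[of M' n s] M' E by (simp add: sum.reindex)
    also have "\<dots> = (\<Sum>e\<in>M'. w e)"
    proof (intro sum.cong refl)
      fix e assume eM: "e \<in> M'"
      then obtain i j where ij: "e = {Uv i, Vv j}" using formE M' by blast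
      have "pr ` e \<notin> E"
      proof
        assume "pr ` e \<in> E"
        then obtain a b where "pr ` e = {Uv a, Vv b}" using formE by blast
        then show False using ij by (auto simp: doubleton_eq_iff)
      qed
      moreover have "pr ` e \<in> Ef E" using prM_Ef[OF E] eM M' by blast
      moreover have "unprime ` (pr ` e) = e" using ij by auto
      ultimately show "ws E w k (pr ` e) = w e" unfolding ws_def by simp
    qed
    finally show ?thesis unfolding mweight_def .
  qed
  have s3: "(\<Sum>e\<in>EUpart n M. ws E w k e) = k * int (card (EUpart n M))"
  proof -
    have "(\<Sum>e\<in>EUpart n M. ws E w k e) = (\<Sum>e\<in>EUpart n M. k)"
    proof (intro sum.cong refl)
      fix e assume "e \<in> EUpart n M"
      then obtain i where ei: "e = {Uv i, Up i}" unfolding EUpart_def by blast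
      have "e \<notin> E"
      proof
        assume "e \<in> E"
        then obtain a b where "e = {Uv a, Vv b}" using formE by blast
        then show False using ei by (auto simp: doubleton_eq_iff)
      qed
      moreover have "e \<notin> Ef E" using ei unfolding Ef_def by (auto simp: doubleton_eq_iff)
      ultimately show "ws E w k e = k" unfolding ws_def by simp
    qed
    then show ?thesis by simp
  qed
  have "mweight (ws E w k) (M \<union> (`) pr ` M' \<union> EUpart n M)
      = (\<Sum>e\<in>M \<union> (`) pr ` M'. ws E w k e) + (\<Sum>e\<in>EUpart n M. ws E w k e)"
    unfolding mweight_def using fM fM' fEU d2 by (simp add: sum.union_disjoint)
  also have "(\<Sum>e\<in>M \<union> (`) pr ` M'. ws E w k e) = (\<Sum>e\<in>M. ws E w k e) + (\<Sum>e\<in>(`) pr ` M'. ws E w k e)"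
    using fM fM' d1 by (simp add: sum.union_disjoint)
  finally show ?thesis using s1 s2 s3 by simp
qed


theorem proposition4p3:
  fixes n s :: nat and E :: "vtx set set" and w :: "vtx set \<Rightarrow> int" and k :: int
    and N :: "vtx set set"
  assumes "s \<le> n"
    and "E \<subseteq> bip_edges n s"
    and "min_weight_perfect_matching (Gs_vertices n s) (Gs_edges n E) (ws E w k) N"
  shows "optimum_matching E w (N \<inter> E) \<and> Vv ` {..<s} \<subseteq> \<Union>(N \<inter> E)"
proof -
  note E = assms(2)
  have Nsub: "N \<subseteq> Gs_edges n E" and Ncov: "\<Union>N = Gs_vertices n s"
    and Ndisj: "\<And>e f. e \<in> N \<Longrightarrow> f \<in> N \<Longrightarrow> e \<noteq> f \<Longrightarrow> e \<inter> f = {}"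
    and Nmin: "\<And>M'. perfect_matching (Gs_vertices n s) (Gs_edges n E) M' \<Longrightarrow>
                 mweight (ws E w k) N \<le> mweight (ws E w k) M'"
    using assms(3) unfolding min_weight_perfect_matching_def perfect_matching_def is_matching_def
    by blast+
  have formE: "\<And>e. e \<in> E \<Longrightarrow> \<exists>i j. i < n \<and> j < s \<and> e = {Uv i, Vv j}"
    using E by (meson edge_form subsetD)
  have Nshape: "(\<exists>i j. e = {Uv i, Vv j} \<and> e \<in> E) \<or>
      (\<exists>i j. e = {Vp j, Up i} \<and> {Uv i, Vv j} \<in> E) \<or> (\<exists>i. i < n \<and> e = {Uv i, Up i})"
    if "e \<in> N" for e
  proof -
    have "e \<in> E \<or> e \<in> Ef E \<or> e \<in> EU n" using Nsub that unfolding Gs_edges_def by blast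
    then show ?thesis
    proof (elim disjE)
      assume eE: "e \<in> E"
      then obtain i j where "e = {Uv i, Vv j}" using formE by blast
      then have "e = {Uv i, Vv j} \<and> e \<in> E" using eE by simp
      then show ?thesis by blast
    next
      assume "e \<in> Ef E"
      then obtain i j where "e = {Vp j, Up i} \<and> {Uv i, Vv j} \<in> E" unfolding Ef_def by blast
      then show ?thesis by blast
    next
      assume "e \<in> EU n"
      then obtain i where "i < n \<and> e = {Uv i, Up i}" unfolding EU_def by blast
      then show ?thesis by blast
    qed
  qed
  define M1 where "M1 = N \<inter> E"
  define M2 where "M2 = {e \<in> E. pr ` e \<in> N}"
  have M1E: "M1 \<subseteq> E" and M2E: "M2 \<subseteq> E" unfolding M1_def M2_def by auto
  have M1B: "M1 \<subseteq> bip_edges n s" and M2B: "M2 \<subseteq> bip_edges n s" using M1E M2E E by auto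
  have M1m: "is_matching E M1" unfolding is_matching_def M1_def using Ndisj by blast
  have M2m: "is_matching E M2" unfolding is_matching_def
  proof (intro conjI M2E ballI impI)
    fix e f assume e: "e \<in> M2" and f: "f \<in> M2" and ne: "e \<noteq> f"
    have "pr ` e \<noteq> pr ` f" using pr_inj[OF M2B] e f ne by (meson inj_onD)
    then have d: "pr ` e \<inter> pr ` f = {}" using Ndisj e f unfolding M2_def by blast
    show "e \<inter> f = {}"
    proof (rule ccontr)
      assume "e \<inter> f \<noteq> {}"
      then obtain x where "x \<in> e" "x \<in> f" by blast
      then have "pr x \<in> pr ` e \<inter> pr ` f" by blast
      then show False using d by blast
    qed
  qed
  have M1cov: "Vv ` {..<s} \<subseteq> \<Union>M1"
  proof
    fix x assume "x \<in> Vv ` {..<s}"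
    then obtain j where j: "j < s" "x = Vv j" by blast
    then have "x \<in> \<Union>N" using Ncov unfolding Gs_vertices_def by blast
    then obtain g where g: "g \<in> N" "Vv j \<in> g" using j by blast
    from Nshape[OF g(1)] have "g \<in> E" using g(2) by auto
    then show "x \<in> \<Union>M1" using g j unfolding M1_def by blast
  qed
  have EfN: "N \<inter> Ef E = (`) pr ` M2"
  proof
    show "N \<inter> Ef E \<subseteq> (`) pr ` M2"
    proof
      fix x assume x: "x \<in> N \<inter> Ef E"
      then obtain i j where ij: "x = {Vp j, Up i}" "{Uv i, Vv j} \<in> E" unfolding Ef_def by blast
      have "pr ` {Uv i, Vv j} = x" using ij by auto
      then have "{Uv i, Vv j} \<in> M2" using x ij unfolding M2_def by auto
      then show "x \<in> (`) pr ` M2" using \<open>pr ` {Uv i, Vv j} = x\<close> by blast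
    qed
    show "(`) pr ` M2 \<subseteq> N \<inter> Ef E" using prM_Ef[OF E] unfolding M2_def by blast
  qed
  have M2cov: "Vv ` {..<s} \<subseteq> \<Union>M2"
  proof
    fix x assume "x \<in> Vv ` {..<s}"
    then obtain j where j: "j < s" "x = Vv j" by blast
    then have "Vp j \<in> \<Union>N" using Ncov unfolding Gs_vertices_def by blast
    then obtain g where g: "g \<in> N" "Vp j \<in> g" by blast
    from Nshape[OF g(1)] g(2) have "g \<in> Ef E" unfolding Ef_def by auto
    then have "g \<in> (`) pr ` M2" using EfN g by blast
    then obtain e where e: "e \<in> M2" "g = pr ` e" by blast
    then obtain i' j' where "e = {Uv i', Vv j'}" using M2E formE by blast
    then show "x \<in> \<Union>M2" using e g j by auto
  qed
  have EUN: "N \<inter> EU n = EUpart n M1"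
  proof
    show "N \<inter> EU n \<subseteq> EUpart n M1"
    proof
      fix x assume x: "x \<in> N \<inter> EU n"
      then obtain i where i: "i < n" "x = {Uv i, Up i}" unfolding EU_def by blast
      have "Uv i \<notin> \<Union>M1"
      proof
        assume "Uv i \<in> \<Union>M1"
        then obtain f where f: "f \<in> M1" "Uv i \<in> f" by blast
        then obtain a b where ab: "f = {Uv a, Vv b}" using M1E formE by blast
        have "f \<noteq> x" using ab i by (auto simp: doubleton_eq_iff)
        then have "f \<inter> x = {}" using Ndisj f x unfolding M1_def by blast
        then show False using f i by blast
      qed
      then show "x \<in> EUpart n M1" using i unfolding EUpart_def by blast
    qed
    show "EUpart n M1 \<subseteq> N \<inter> EU n"
    proof
      fix x assume "x \<in> EUpart n M1"
      then obtain i where i: "i < n" "Uv i \<notin> \<Union>M1" "x = {Uv i, Up i}" unfolding EUpart_def by blast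
      then have "Uv i \<in> \<Union>N" using Ncov unfolding Gs_vertices_def by blast
      then obtain g where g: "g \<in> N" "Uv i \<in> g" by blast
      have "g \<notin> E" using g i unfolding M1_def by blast
      with Nshape[OF g(1)] g(2) have "g = x" using i by auto
      then show "x \<in> N \<inter> EU n" using g i unfolding EU_def by blast
    qed
  qed
  have Ndec: "N = M1 \<union> (`) pr ` M2 \<union> EUpart n M1"
  proof -
    have "N = (N \<inter> E) \<union> (N \<inter> Ef E) \<union> (N \<inter> EU n)" using Nsub unfolding Gs_edges_def by blast
    then show ?thesis using EfN EUN unfolding M1_def by simp
  qed
  have c1: "card M1 = s" using card_eq_s[OF M1B M1m M1cov] .
  have c2: "card M2 = s" using card_eq_s[OF M2B M2m M2cov] .
  define X where "X = k * int (n - s)"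
  have wN: "mweight (ws E w k) N = mweight w M1 + mweight w M2 + X"
    using gen_weight[OF E M1E M2E, of w k] Ndec card_EUpart[OF M1B M1m] c1 X_def by simp
  have wNM: "mweight (ws E w k) (NM n M) = 2 * mweight w M + X"
    if "M \<subseteq> E" "is_matching E M" "card M = s" for M
  proof -
    have MB: "M \<subseteq> bip_edges n s" using that E by auto
    show ?thesis using gen_weight[OF E that(1) that(1), of w k] card_EUpart[OF MB that(2)] that(3) X_def
      unfolding NM_def by simp
  qed
  have pNM: "mweight (ws E w k) N \<le> 2 * mweight w M + X"
    if "M \<subseteq> E" "is_matching E M" "card M = s" for M
  proof -
    have MB: "M \<subseteq> bip_edges n s" using that E by auto
    have "perfect_matching (Gs_vertices n s) (Gs_edges n E) (NM n M)"
      using NM_perfect[OF E that(1,2) covers_of_card[OF MB that(2,3)]] .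
    then show ?thesis using Nmin wNM[OF that] by fastforce
  qed
  have eq: "mweight w M1 = mweight w M2"
    using pNM[OF M1E M1m c1] pNM[OF M2E M2m c2] wN by simp
  have maxc: "max_card_matching E M1"
    unfolding max_card_matching_def
  proof (intro conjI M1m allI impI)
    fix M' assume "is_matching E M'"
    moreover then have "M' \<subseteq> bip_edges n s" using E unfolding is_matching_def by blast
    ultimately show "card M' \<le> card M1" using card_le_s c1 by metis
  qed
  have opt: "optimum_matching E w M1"
    unfolding optimum_matching_def
  proof (intro conjI maxc allI impI)
    fix M' assume M': "max_card_matching E M'"
    then have M'm: "is_matching E M'" and ge: "card M1 \<le> card M'"
      using M1m unfolding max_card_matching_def by auto
    have M'E: "M' \<subseteq> E" using M'm unfolding is_matching_def by blast
    have "card M' \<le> s" using card_le_s[of M' n s E] M'E E M'm by auto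
    then have "card M' = s" using ge c1 by simp
    then show "mweight w M1 \<le> mweight w M'"
      using pNM[OF M'E M'm] wN eq by simp
  qed
  show ?thesis using opt M1cov unfolding M1_def by simp
qed

end
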